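(* In the setting described in the context, the society-wide game has a unique Bayesian equilibrium $x^{soc}$ and the friend game has a unique Bayesian equilibrium $x^{friend}$, given for all $(\theta_i,d_i)\in\Theta\times D$ by $$x^{soc}(\theta_i,d_i)=\frac{\theta_i}{c}+\frac{a\,d_i\,\mathrm{E}[\theta]}{c\,(c-a\,\mathrm{E}[d])},\qquad x^{friend}(\theta_i,d_i)=\frac{\theta_i}{c}+\frac{a\,d_i\,\widetilde{\mathrm{E}}[\theta]}{c\,(c-a\,\widetilde{\mathrm{E}}[d])}.$$
   Context: Fix an integer $n\ge 2$ (number of agents), parameters $a>0$, $c>0$, $\phi\in\mathbb{R}$, and a compact set $\Theta\subset[0,\infty)$ of types. Let $D=\{1,\dots,n-1\}$ (possible degrees). Let $P$ be a probability distribution on $\Theta\times D$, the joint distribution of the type $\theta$ and degree $d$ of a generic potential neighbor, the same for every agent; $\mathrm{E}$ denotes expectation under $P$. The neighbor distribution $\widetilde P$ on $\Theta\times D$ is defined by $\widetilde P(A\times\{d\})=\frac{d}{\mathrm{E}[d]}P(A\times\{d\})$, with expectation $\widetilde{\mathrm{E}}$, so $\widetilde{\mathrm{E}}[h(\theta,d)]=\mathrm{E}[d\,h(\theta,d)]/\mathrm{E}[d]$. Standing assumptions: $P(\theta>0)>0$ and $c>a\,\widetilde{\mathrm{E}}[d]$. A strategy is a bounded measurable function $x:\Theta\times D\to[0,\infty)$, used by all agents. If the others use $x$, an agent of type $\theta_i$ and degree $d_i$ choosing action $y\ge 0$ gets in the society-wide game $EU^{soc}(y;\theta_i,d_i;x)=\theta_i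 y+a\,y\,d_i\,\mathrm{E}[x(\theta,d)]-\frac{c}{2}y^2+\phi(n-1)\mathrm{E}[x(\theta,d)]$, and in the friend game $EU^{friend}(y;\theta_i,d_i;x)=\theta_i y+a\,y\,d_i\,\widetilde{\mathrm{E}}[x(\theta,d)]-\frac{c}{2}y^2+\phi(n-1)\mathrm{E}[x(\theta,d)]$. A Bayesian equilibrium of a game is a strategy $x$ such that for every $(\theta_i,d_i)\in\Theta\times D$, $y=x(\theta_i,d_i)$ maximizes the agent's payoff in that game over $y\ge 0$, given that the others use $x$. *)

theory Defs
  imports "HOL-Probability.Probability"
begin

definition degrees :: "nat \<Rightarrow> nat set" where
  "degrees n = {1..n-1}"

definition type_degree_space :: "real set \<Rightarrow> nat \<Rightarrow> (real \<times> nat) measure" where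
  "type_degree_space \<Theta> n =
     restrict_space (borel \<Otimes>\<^sub>M count_space UNIV) (\<Theta> \<times> degrees n)"

text \<open>Expectation E under P and neighbour expectation E-tilde.\<close>
definition Ex :: "(real \<times> nat) measure \<Rightarrow> (real \<times> nat \<Rightarrow> real) \<Rightarrow> real" where
  "Ex P h = integral\<^sup>L P h"

definition Ext :: "(real \<times> nat) measure \<Rightarrow> (real \<times> nat \<Rightarrow> real) \<Rightarrow> real" where
  "Ext P h = Ex P (\<lambda>t. real (snd t) * h t) / Ex P (\<lambda>t. real (snd t))"

text \<open>Payoffs: y is own action, thi own type, di own degree, x the strategy of the others.\<close>
definition EU_soc :: "nat \<Rightarrow> real \<Rightarrow> real \<Rightarrow> real \<Rightarrow> (real \<times> nat) measure
    \<Rightarrow> real \<Rightarrow> real \<Rightarrow> nat \<Rightarrow> (real \<times> nat \<Rightarrow> real) \<Rightarrow> real" where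
  "EU_soc n a c \<phi> P y thi di x =
     thi * y + a * y * real di * Ex P x - c / 2 * y\<^sup>2 + \<phi> * real (n - 1) * Ex P x"

definition EU_friend :: "nat \<Rightarrow> real \<Rightarrow> real \<Rightarrow> real \<Rightarrow> (real \<times> nat) measure
    \<Rightarrow> real \<Rightarrow> real \<Rightarrow> nat \<Rightarrow> (real \<times> nat \<Rightarrow> real) \<Rightarrow> real" where
  "EU_friend n a c \<phi> P y thi di x =
     thi * y + a * y * real di * Ext P x - c / 2 * y\<^sup>2 + \<phi> * real (n - 1) * Ex P x"

definition is_strategy :: "real set \<Rightarrow> nat \<Rightarrow> (real \<times> nat) measure \<Rightarrow> (real \<times> nat \<Rightarrow> real) \<Rightarrow> bool" where
  "is_strategy \<Theta> n P x \<longleftrightarrow>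
     x \<in> borel_measurable P \<and> bounded (x ` (\<Theta> \<times> degrees n)) \<and>
     (\<forall>t \<in> \<Theta> \<times> degrees n. 0 \<le> x t)"

definition bayes_eq :: "(real \<Rightarrow> real \<Rightarrow> nat \<Rightarrow> (real \<times> nat \<Rightarrow> real) \<Rightarrow> real)
    \<Rightarrow> real set \<Rightarrow> nat \<Rightarrow> (real \<times> nat) measure \<Rightarrow> (real \<times> nat \<Rightarrow> real) \<Rightarrow> bool" where
  "bayes_eq EU \<Theta> n P x \<longleftrightarrow> is_strategy \<Theta> n P x \<and>
     (\<forall>thi \<in> \<Theta>. \<forall>di \<in> degrees n. \<forall>y \<ge> 0. EU y thi di x \<le> EU (x (thi, di)) thi di x)"

end

theory Submission
  imports Defs
begin

lemma br_unique:
  fixes c K x0 C :: real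
  assumes "c > 0" "K \<ge> 0" "\<forall>y\<ge>0. K*y - c/2*y^2 + C \<le> K*x0 - c/2*x0^2 + C"
  shows "x0 = K/c"
proof -
  have "K*(K/c) - c/2*(K/c)^2 + C \<le> K*x0 - c/2*x0^2 + C"
    using assms(3)[rule_format, of "K/c"] assms(1,2) by simp
  hence "K*(K/c) - c/2*(K/c)^2 \<le> K*x0 - c/2*x0^2" by simp
  hence "(c*x0 - K)^2 \<le> 0" using assms(1)
    by (simp add: field_simps power2_eq_square)
  hence "c*x0 = K" by simp
  thus ?thesis using assms(1) by (simp add: field_simps)
qed

lemma br_opt:
  fixes c K y :: real
  assumes "c > 0"
  shows "K*y - c/2*y^2 \<le> K*(K/c) - c/2*(K/c)^2"
proof -
  have "0 \<le> (c*y - K)^2" by simp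
  thus ?thesis using assms by (simp add: field_simps power2_eq_square)
qed

context
  fixes n :: nat and a c :: real and \<Theta> :: "real set" and P :: "(real \<times> nat) measure"
  assumes n2: "n \<ge> 2" and ap: "a > 0" and cp: "c > 0"
    and cpt: "compact \<Theta>" and nn: "\<Theta> \<subseteq> {0..}"
    and ps: "prob_space P" and sts: "sets P = sets (type_degree_space \<Theta> n)"
begin

lemma sp: "space P = \<Theta> \<times> degrees n"
  using sets_eq_imp_space_eq[OF sts]
  by (simp add: type_degree_space_def space_restrict_space space_pair_measure)

lemma measP: "f \<in> borel_measurable (borel \<Otimes>\<^sub>M count_space UNIV) \<Longrightarrow> f \<in> borel_measurable P"
  using measurable_cong_sets[OF sts refl, of borel] measurable_restrict_space1
  by (metis type_degree_space_def)

lemma int_bdd: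
  fixes B :: real
  assumes "f \<in> borel_measurable P" "\<And>t. t \<in> space P \<Longrightarrow> \<bar>f t\<bar> \<le> B"
  shows "integrable P f"
proof -
  interpret prob_space P by (rule ps)
  show ?thesis by (rule integrable_const_bound[where B=B]) (use assms in auto)
qed

lemma thB: obtains B where "\<And>t. t \<in> space P \<Longrightarrow> 0 \<le> fst t \<and> fst t \<le> B"
proof -
  obtain B where "\<forall>x\<in>\<Theta>. norm x \<le> B" using compact_imp_bounded[OF cpt] bounded_iff by blast
  hence "\<And>t. t \<in> space P \<Longrightarrow> 0 \<le> fst t \<and> fst t \<le> B" using nn sp by force
  thus ?thesis using that by blast
qed

lemma fin: "finite_measure P"
proof -
  interpret prob_space P by (rule ps)
  show ?thesis by unfold_locales
qed

lemma sndb: "t \<in> space P \<Longrightarrow> 1 \<le> real (snd t) \<and> real (snd t) \<le> real n"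
  using sp by (auto simp: degrees_def)

lemma mf: "fst \<in> borel_measurable P" by (rule measP) measurable
lemma md: "(\<lambda>t. real (snd t)) \<in> borel_measurable P" by (rule measP) measurable

lemma ifst: "integrable P fst"
proof -
  obtain B where B: "\<And>t. t \<in> space P \<Longrightarrow> 0 \<le> fst t \<and> fst t \<le> B" using thB by blast
  show ?thesis by (rule int_bdd[OF mf, of B]) (use B in force)
qed

lemma isnd: "integrable P (\<lambda>t. real (snd t))"
  by (rule int_bdd[OF md, of n]) (use sndb in force)

lemma isndfst: "integrable P (\<lambda>t. real (snd t) * fst t)"
proof -
  obtain B where B: "\<And>t. t \<in> space P \<Longrightarrow> 0 \<le> fst t \<and> fst t \<le> B" using thB by blast
  have "\<bar>real (snd t) * fst t\<bar> \<le> n * B" if "t \<in> space P" for t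
    using B[OF that] sndb[OF that] by (simp add: abs_mult mult_mono)
  thus ?thesis by (intro int_bdd[of _ "n*B"]) (auto intro: borel_measurable_times mf md)
qed

lemma isnd2: "integrable P (\<lambda>t. real (snd t) * real (snd t))"
proof -
  have "\<bar>real (snd t) * real (snd t)\<bar> \<le> n * n" if "t \<in> space P" for t
    using sndb[OF that] by (simp add: abs_mult mult_mono)
  thus ?thesis by (intro int_bdd[of _ "n*n"]) (auto intro: borel_measurable_times md)
qed

lemma lin1: "Ex P (\<lambda>t. u * fst t + v * real (snd t)) = u * Ex P fst + v * Ex P (\<lambda>t. real (snd t))"
  unfolding Ex_def using ifst isnd by simp

lemma lin2: "Ex P (\<lambda>t. real (snd t) * (u * fst t + v * real (snd t)))
   = u * Ex P (\<lambda>t. real (snd t) * fst t) + v * Ex P (\<lambda>t. real (snd t) * real (snd t))"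
proof -
  have "Ex P (\<lambda>t. real (snd t) * (u * fst t + v * real (snd t)))
     = Ex P (\<lambda>t. u * (real (snd t) * fst t) + v * (real (snd t) * real (snd t)))"
    by (simp add: algebra_simps)
  also have "\<dots> = u * Ex P (\<lambda>t. real (snd t) * fst t) + v * Ex P (\<lambda>t. real (snd t) * real (snd t))"
    unfolding Ex_def using isndfst isnd2 by simp
  finally show ?thesis .
qed

lemma Ed1: "1 \<le> Ex P (\<lambda>t. real (snd t))"
proof -
  have "Ex P (\<lambda>t. 1) \<le> Ex P (\<lambda>t. real (snd t))"
    unfolding Ex_def by (rule integral_mono) (use isnd sndb ps fin finite_measure.integrable_const in auto)
  thus ?thesis using prob_space.prob_space[OF ps] by (simp add: Ex_def)
qed

lemma Eth0: "0 \<le> Ex P fst"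
  unfolding Ex_def by (rule integral_nonneg_AE, rule AE_I2) (use sp nn in auto)

lemma Edth0: "0 \<le> Ex P (\<lambda>t. real (snd t) * fst t)"
  unfolding Ex_def by (rule integral_nonneg_AE, rule AE_I2) (use sp nn in auto)

lemma Ed2: "Ex P (\<lambda>t. real (snd t)) ^ 2 \<le> Ex P (\<lambda>t. real (snd t) * real (snd t))"
proof -
  define m where "m = Ex P (\<lambda>t. real (snd t))"
  have ic: "integrable P (\<lambda>t. m^2)" by (rule finite_measure.integrable_const[OF fin])
  have i1: "integrable P (\<lambda>t. (-2*m)*real(snd t))" by (rule integrable_mult_right[OF isnd])
  have i3: "integrable P (\<lambda>t. (-2*m)*real(snd t) + m^2)"
    by (rule Bochner_Integration.integrable_add[OF i1 ic])
  have e1: "(\<lambda>t. (real (snd t) - m)^2) = (\<lambda>t. real (snd t) * real (snd t) + ((-2*m)*real(snd t) + m^2))"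
    by (rule ext) (simp add: power2_eq_square algebra_simps)
  have c1: "Ex P (\<lambda>t. m^2) = m^2"
    using prob_space.prob_space[OF ps] by (simp add: Ex_def)
  have c2: "Ex P (\<lambda>t. (-2*m)*real(snd t)) = (-2*m)*m"
    unfolding Ex_def m_def by (rule integral_mult_right_zero)
  have c3: "Ex P (\<lambda>t. (-2*m)*real(snd t) + m^2) = (-2*m)*m + m^2"
    using Bochner_Integration.integral_add[OF i1 ic] c1 c2 unfolding Ex_def by linarith
  have c4: "Ex P (\<lambda>t. (real (snd t) - m)^2) = Ex P (\<lambda>t. real (snd t) * real (snd t)) + ((-2*m)*m + m^2)"
    unfolding e1 using Bochner_Integration.integral_add[OF isnd2 i3] c3 unfolding Ex_def by linarith
  have "0 \<le> Ex P (\<lambda>t. (real (snd t) - m)^2)"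
    unfolding Ex_def by (rule integral_nonneg_AE) auto
  thus ?thesis using c4 by (simp add: m_def power2_eq_square)
qed

lemma xeq_gen:
  assumes "x = (\<lambda>(thi,di). thi/c + a*real di*Q/(c*L))" "Q/L = M"
  shows "x (thi, di) = thi/c + (a*M/c)*real di"
proof (cases "L = 0")
  case True thus ?thesis using assms by simp
next
  case False thus ?thesis using assms cp by (simp add: field_simps)
qed

lemma uniq_gen:
  assumes "bayes_eq EU \<Theta> n P x" "\<And>thi di y. EU y thi di x = (thi + a*real di*M)*y - c/2*y^2 + C"
    "M \<ge> 0" "t \<in> space P"
  shows "x t = (1/c)*fst t + (a*M/c)*real (snd t)"
proof -
  obtain thi di where t: "t = (thi,di)" by fastforce
  have th: "thi \<in> \<Theta>" "di \<in> degrees n" using sp assms(4) t by auto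
  have "\<forall>y\<ge>0. (thi + a*real di*M)*y - c/2*y^2 + C \<le> (thi+a*real di*M)*x t - c/2*(x t)^2 + C"
    using assms(1) th unfolding bayes_eq_def t assms(2) by auto
  moreover have "0 \<le> thi + a*real di*M" using th nn ap assms(3) by auto
  ultimately have "x t = (thi + a*real di*M)/c" by (intro br_unique cp)
  thus ?thesis by (simp add: t add_divide_distrib)
qed

lemma exist_gen:
  assumes "\<And>thi di y. EU y thi di x = (thi + a*real di*M)*y - c/2*y^2 + C"
   "x = (\<lambda>(thi,di). thi/c + a*real di*Q/(c*L))" "Q/L = M" "0 \<le> M"
  shows "bayes_eq EU \<Theta> n P x"
proof -
  have xe: "\<And>thi di. x (thi, di) = thi/c + (a*M/c)*real di" by (rule xeq_gen[OF assms(2,3)])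
  have m: "x \<in> borel_measurable P" unfolding assms(2) by (rule measP) measurable
  obtain B where B: "\<And>t. t \<in> space P \<Longrightarrow> 0 \<le> fst t \<and> fst t \<le> B" using thB by blast
  have bd: "\<bar>x t\<bar> \<le> B/c + (a*M/c)*n" and nn0: "0 \<le> x t" if "t \<in> \<Theta> \<times> degrees n" for t
  proof -
    obtain thi di where t: "t = (thi,di)" by fastforce
    have "0 \<le> thi" "thi \<le> B" "1 \<le> real di" "real di \<le> n" using B[of t] sndb[of t] that sp t by auto
    moreover have k: "0 \<le> a*M/c" using ap cp assms(4) by simp
    ultimately have h1: "0 \<le> thi/c" "thi/c \<le> B/c"
      using cp by (auto intro: divide_right_mono)
    have dn: "real di \<le> real n" using sndb[of t] that sp t by auto
    have h2: "0 \<le> (a*M/c)*real di" by (rule mult_nonneg_nonneg[OF k]) simp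
    have h3: "(a*M/c)*real di \<le> (a*M/c)*n" by (rule mult_left_mono[OF dn k])
    note h1 h2 h3
    thus "\<bar>x t\<bar> \<le> B/c + (a*M/c)*n" "0 \<le> x t" unfolding t xe by linarith+
  qed
  have "bounded (x ` (\<Theta> \<times> degrees n))" unfolding bounded_iff using bd by auto
  hence strat: "is_strategy \<Theta> n P x" unfolding is_strategy_def using m nn0 by auto
  show ?thesis unfolding bayes_eq_def
  proof (intro conjI strat ballI allI impI)
    fix thi di y assume "thi \<in> \<Theta>" "di \<in> degrees n" "(0::real) \<le> y"
    have "x (thi,di) = (thi + a*real di*M)/c" unfolding xe by (simp add: add_divide_distrib)
    thus "EU y thi di x \<le> EU (x (thi, di)) thi di x" unfolding assms(1)
      using br_opt[OF cp, of "thi + a*real di*M" y] by simp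
  qed
qed

end
theorem lemma3:
  fixes n :: nat and a c \<phi> :: real and \<Theta> :: "real set" and P :: "(real \<times> nat) measure"
  assumes "n \<ge> 2" and "a > 0" and "c > 0"
    and "compact \<Theta>" and "\<Theta> \<subseteq> {0..}"
    and "prob_space P" and "sets P = sets (type_degree_space \<Theta> n)"
    and "measure P {t \<in> space P. fst t > 0} > 0"
    and "c > a * Ext P (\<lambda>t. real (snd t))"
  shows "bayes_eq (EU_soc n a c \<phi> P) \<Theta> n P
           (\<lambda>(thi, di). thi / c + a * real di * Ex P fst / (c * (c - a * Ex P (\<lambda>t. real (snd t)))))
       \<and> (\<forall>x. bayes_eq (EU_soc n a c \<phi> P) \<Theta> n P x \<longrightarrow>
             (\<forall>thi \<in> \<Theta>. \<forall>di \<in> degrees n.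
                x (thi, di) = thi / c + a * real di * Ex P fst / (c * (c - a * Ex P (\<lambda>t. real (snd t))))))
       \<and> bayes_eq (EU_friend n a c \<phi> P) \<Theta> n P
           (\<lambda>(thi, di). thi / c + a * real di * Ext P fst / (c * (c - a * Ext P (\<lambda>t. real (snd t)))))
       \<and> (\<forall>x. bayes_eq (EU_friend n a c \<phi> P) \<Theta> n P x \<longrightarrow>
             (\<forall>thi \<in> \<Theta>. \<forall>di \<in> degrees n.
                x (thi, di) = thi / c + a * real di * Ext P fst / (c * (c - a * Ext P (\<lambda>t. real (snd t))))))"
proof -
  note A = assms(1-7)
  define Ed where "Ed = Ex P (\<lambda>t. real (snd t))"
  define Ed2 where "Ed2 = Ex P (\<lambda>t. real (snd t) * real (snd t))"
  define Eth where "Eth = Ex P fst"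
  define Edth where "Edth = Ex P (\<lambda>t. real (snd t) * fst t)"
  have Ed1: "1 \<le> Ed" using Ed1[OF A] by (simp add: Ed_def)
  have Ed2i: "Ed^2 \<le> Ed2" using Ed2[OF A] by (simp add: Ed_def Ed2_def)
  have Eth0: "0 \<le> Eth" using Eth0[OF A] by (simp add: Eth_def)
  have Edth0: "0 \<le> Edth" using Edth0[OF A] by (simp add: Edth_def)
  have extd: "Ext P (\<lambda>t. real (snd t)) = Ed2/Ed" by (simp add: Ext_def Ed_def Ed2_def)
  have extth: "Ext P fst = Edth/Ed" by (simp add: Ext_def Ed_def Edth_def)
  have sp: "space P = \<Theta> \<times> degrees n" by (rule sp[OF A])
  have cEd2: "a * (Ed2/Ed) < c" using assms(9) extd by simp
  have "Ed \<le> Ed2/Ed" using Ed1 Ed2i by (simp add: field_simps power2_eq_square)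
  hence cEd: "a * Ed < c" using cEd2 assms(2) by (smt (verit) mult_left_mono)
  have lin1: "\<And>u v. Ex P (\<lambda>t. u * fst t + v * real (snd t)) = u * Eth + v * Ed"
    using lin1[OF A] by (simp add: Eth_def Ed_def)
  have lin2: "\<And>u v. Ex P (\<lambda>t. real (snd t) * (u * fst t + v * real (snd t))) = u * Edth + v * Ed2"
    using lin2[OF A] by (simp add: Edth_def Ed2_def)
  have cand: "\<And>Q L. (\<lambda>(thi, di). thi / c + a * real di * Q / (c * L)) = (\<lambda>t. (1/c) * fst t + (a*Q/(c*L)) * real (snd t))"
    by (auto simp: fun_eq_iff)
  have EUs: "\<And>x thi di y. EU_soc n a c \<phi> P y thi di x = (thi + a*real di*Ex P x)*y - c/2*y^2 + \<phi>*real(n-1)*Ex P x"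
    by (simp add: EU_soc_def algebra_simps)
  have EUf: "\<And>x thi di y. EU_friend n a c \<phi> P y thi di x = (thi + a*real di*Ext P x)*y - c/2*y^2 + \<phi>*real(n-1)*Ex P x"
    by (simp add: EU_friend_def algebra_simps)
  have nonnegEx: "0 \<le> Ex P x" if "is_strategy \<Theta> n P x" for x
    unfolding Ex_def by (rule integral_nonneg_AE, rule AE_I2) (use that sp in \<open>auto simp: is_strategy_def\<close>)
  have integ: "integrable P x" if st0: "is_strategy \<Theta> n P x" for x
  proof -
    obtain B where "\<forall>z\<in>x ` (\<Theta> \<times> degrees n). norm z \<le> B"
      using st0 unfolding is_strategy_def bounded_iff by blast
    thus ?thesis using st0 sp by (intro int_bdd[OF A, of x B]) (auto simp: is_strategy_def)
  qed
  define L1 where "L1 = c - a * Ed"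
  have L1: "L1 > 0" using cEd by (simp add: L1_def)
  define L2 where "L2 = c - a * (Ed2/Ed)"
  have L2: "L2 > 0" using cEd2 by (simp add: L2_def)
  define x1 where "x1 = (\<lambda>(thi, di). thi / c + a * real di * Eth / (c * L1))"
  have Ex1: "Ex P x1 = Eth / L1"
  proof -
    have "Ex P x1 = (1/c) * Eth + (a*Eth/(c*L1)) * Ed" unfolding x1_def cand lin1 ..
    also have "\<dots> = Eth / L1" using L1 assms(3) by (simp add: L1_def field_simps)
    finally show ?thesis .
  qed
  have s1: "bayes_eq (EU_soc n a c \<phi> P) \<Theta> n P x1"
    by (rule exist_gen[OF A EUs x1_def]) (use Ex1 Eth0 L1 in auto)
  have s2: "x (thi, di) = thi / c + a * real di * Eth / (c * L1)"
    if eq: "bayes_eq (EU_soc n a c \<phi> P) \<Theta> n P x" and th: "thi \<in> \<Theta>" "di \<in> degrees n" for x thi di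
  proof -
    define M where "M = Ex P x"
    have st: "is_strategy \<Theta> n P x" using eq by (simp add: bayes_eq_def)
    have M0: "M \<ge> 0" using nonnegEx[OF st] by (simp add: M_def)
    have pt: "\<And>t. t \<in> space P \<Longrightarrow> x t = (1/c)*fst t + (a*M/c)*real (snd t)"
      by (rule uniq_gen[OF A eq _ M0]) (simp add: EUs M_def)
    have "M = Ex P x" by (simp add: M_def)
    also have "\<dots> = Ex P (\<lambda>t. (1/c)*fst t + (a*M/c)*real (snd t))"
      unfolding Ex_def by (rule Bochner_Integration.integral_cong[OF refl pt])
    also have "\<dots> = (1/c)*Eth + (a*M/c)*Ed" by (rule lin1)
    finally have "M * c = Eth + a*M*Ed" using assms(3) by (simp add: field_simps)
    hence "M = Eth / L1" using L1 by (simp add: L1_def field_simps)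
    moreover have "x (thi, di) = (1/c)*thi + (a*M/c)*real di" using pt[of "(thi,di)"] sp th by simp
    ultimately show ?thesis using L1 assms(3) by (simp add: field_simps)
  qed
  define x2 where "x2 = (\<lambda>(thi, di). thi / c + a * real di * (Edth/Ed) / (c * L2))"
  have Ex2: "Ext P x2 = (Edth/Ed) / L2"
  proof -
    have "Ex P (\<lambda>t. real (snd t) * x2 t) = (1/c) * Edth + (a*(Edth/Ed)/(c*L2)) * Ed2"
      unfolding x2_def cand lin2 ..
    hence "Ext P x2 = ((1/c) * Edth + (a*(Edth/Ed)/(c*L2)) * Ed2) / Ed"
      by (simp add: Ext_def Ed_def)
    also have "\<dots> = (Edth/Ed) / L2" using L2 assms(3) Ed1 by (simp add: L2_def field_simps)
    finally show ?thesis .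
  qed
  have f1: "bayes_eq (EU_friend n a c \<phi> P) \<Theta> n P x2"
    by (rule exist_gen[OF A EUf x2_def]) (use Ex2 Edth0 L2 Ed1 in auto)
  have f2: "x (thi, di) = thi / c + a * real di * (Edth/Ed) / (c * L2)"
    if eq: "bayes_eq (EU_friend n a c \<phi> P) \<Theta> n P x" and th: "thi \<in> \<Theta>" "di \<in> degrees n" for x thi di
  proof -
    define M where "M = Ext P x"
    have st: "is_strategy \<Theta> n P x" using eq by (simp add: bayes_eq_def)
    have ix: "integrable P x" by (rule integ[OF st])
    have "0 \<le> Ex P (\<lambda>t. real (snd t) * x t)"
      unfolding Ex_def by (rule integral_nonneg_AE, rule AE_I2) (use st sp in \<open>auto simp: is_strategy_def\<close>)
    hence M0: "M \<ge> 0" using Ed1 by (simp add: M_def Ext_def Ed_def)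
    have pt: "\<And>t. t \<in> space P \<Longrightarrow> x t = (1/c)*fst t + (a*M/c)*real (snd t)"
      by (rule uniq_gen[OF A eq _ M0]) (simp add: EUf M_def)
    have "Ex P (\<lambda>t. real (snd t) * x t) = Ex P (\<lambda>t. real (snd t) * ((1/c)*fst t + (a*M/c)*real (snd t)))"
      unfolding Ex_def by (rule Bochner_Integration.integral_cong[OF refl]) (simp add: pt)
    also have "\<dots> = (1/c)*Edth + (a*M/c)*Ed2" by (rule lin2)
    finally have "M = ((1/c)*Edth + (a*M/c)*Ed2) / Ed" by (simp add: M_def Ext_def Ed_def)
    hence "M * Ed * c = Edth + a*M*Ed2" using assms(3) Ed1 by (simp add: field_simps)
    hence "M = (Edth/Ed) / L2" using L2 Ed1 assms(3) by (simp add: L2_def field_simps)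
    moreover have "x (thi, di) = (1/c)*thi + (a*M/c)*real di" using pt[of "(thi,di)"] sp th by simp
    ultimately show ?thesis using L2 assms(3) by (simp add: field_simps)
  qed
  show ?thesis
    unfolding extd extth using s1 s2 f1 f2 unfolding x1_def x2_def L1_def L2_def Ed_def Eth_def Ed2_def Edth_def
    by blast
qed

end
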